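(* Let $\alpha\in(0,1)$. Assume the setting described in the context, and assume: (i) (concentration over calibration data) there exist $\varepsilon_{\mathrm{cal}},\delta_{\mathrm{cal}}\in(0,1)$ such that for every measurable $q:(\mathcal{X}\times\mathcal{Y})^{n_{\mathrm{train}}}\to\mathbb{R}$, \[\mathbb{P}\left[\left|\frac{1}{n_{\mathrm{cal}}}\sum_{i\in I_{\mathrm{cal}}}\mathbf{1}\{\widehat{s}_{\mathrm{train}}(X_i,Y_i)\le q_{\mathrm{train}}\}-P_{q,\mathrm{train}}\right|\le\varepsilon_{\mathrm{cal}}\right]\ge 1-\delta_{\mathrm{cal}};\] (ii) (concentration over test data) there exist $\varepsilon_{\mathrm{test}},\delta_{\mathrm{test}}\in(0,1)$ such that for every measurable $q:(\mathcal{X}\times\mathcal{Y})^{n_{\mathrm{train}}}\to\mathbb{R}$, \[\mathbb{P}\left[\left|P_{q,\mathrm{train}}-\frac{1}{n_{\mathrm{test}}}\sum_{i\in I_{\mathrm{test}}}\mathbf{1}\{\widehat{s}_{\mathrm{train}}(X_i,Y_i)\le q_{\mathrm{train}}\}\right|\le\varepsilon_{\mathrm{test}}\right]\ge 1-\delta_{\mathrm{test}}.\] Let $\eta=\varepsilon_{\mathrm{cal}}+\varepsilon_{\mathrm{test}}$. Then \[\mathbb{P}\left[\frac{1}{n_{\mathrm{test}}}\sum_{i\in I_{\mathrm{test}}}\mathbf{1}\{Y_i\in C_{1-\alpha}(X_i)\}\ge 1-\alpha-\eta\right]\ge 1-\delta_{\mathrm{cal}}-\delta_{\mathrm{test}}.\]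 Additionally, if $\widehat{s}_{\mathrm{train}}(X_*,Y_* )$ almost surely has a continuous distribution conditionally on the training data, then \[\mathbb{P}\left[\left|\frac{1}{n_{\mathrm{test}}}\sum_{i\in I_{\mathrm{test}}}\mathbf{1}\{Y_i\in C_{1-\alpha}(X_i)\}-(1-\alpha)\right|\le\eta\right]\ge 1-2\delta_{\mathrm{cal}}-2\delta_{\mathrm{test}}.\]
   Context: Let $\mathcal{X},\mathcal{Y}$ be measurable spaces. The sample $(X_i,Y_i)_{i=1}^n$ consists of random pairs in $\mathcal{X}\times\mathcal{Y}$, and $(X_*,Y_* )$ is an additional random pair, independent of the sample, with $(X_i,Y_i)\sim(X_*,Y_* )$ for all $i\in\{1,\dots,n\}$. Write $n=n_{\mathrm{train}}+n_{\mathrm{cal}}+n_{\mathrm{test}}$ with positive integers, $I_{\mathrm{train}}=\{1,\dots,n_{\mathrm{train}}\}$, $I_{\mathrm{cal}}=\{n_{\mathrm{train}}+1,\dots,n_{\mathrm{train}}+n_{\mathrm{cal}}\}$, $I_{\mathrm{test}}=\{n_{\mathrm{train}}+n_{\mathrm{cal}}+1,\dots,n\}$. Let $s:(\mathcal{X}\times\mathcal{Y})^{n_{\mathrm{train}}+1}\to\mathbb{R}$ be any (measurable) function and $\widehat{s}_{\mathrm{train}}(x,y)=s((X_i,Y_i)_{i\in I_{\mathrm{train}}},(x,y))$. For $\phi\in[0,1)$, $\widehat{q}_{\phi,\mathrm{cal}}=\inf\{t\in\mathbb{R}:\frac{1}{n_{\mathrm{cal}}}\sum_{i\in I_{\mathrm{cal}}}\mathbf{1}\{\widehat{s}_{\mathrm{train}}(X_i,Y_i)\le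 t\}\ge\phi\}$ and $C_\phi(x)=\{y\in\mathcal{Y}:\widehat{s}_{\mathrm{train}}(x,y)\le\widehat{q}_{\phi,\mathrm{cal}}\}$. For measurable $q:(\mathcal{X}\times\mathcal{Y})^{n_{\mathrm{train}}}\to\mathbb{R}$, $q_{\mathrm{train}}=q((X_i,Y_i)_{i\in I_{\mathrm{train}}})$ and $P_{q,\mathrm{train}}=\mathbb{P}[\widehat{s}_{\mathrm{train}}(X_*,Y_* )\le q_{\mathrm{train}}\mid (X_i,Y_i)_{i\in I_{\mathrm{train}}}]$. *)

theory Defs
  imports "HOL-Probability.Probability"
begin

definition I_train :: "nat \<Rightarrow> nat set" where
  "I_train ntr = {1..ntr}"

definition I_cal :: "nat \<Rightarrow> nat \<Rightarrow> nat set" where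
  "I_cal ntr ncal = {ntr + 1..ntr + ncal}"

definition I_test :: "nat \<Rightarrow> nat \<Rightarrow> nat \<Rightarrow> nat set" where
  "I_test ntr ncal nte = {ntr + ncal + 1..ntr + ncal + nte}"

definition train_data ::
  "(nat \<Rightarrow> 'w \<Rightarrow> 'x) \<Rightarrow> (nat \<Rightarrow> 'w \<Rightarrow> 'y) \<Rightarrow> nat \<Rightarrow> 'w \<Rightarrow> (nat \<Rightarrow> 'x \<times> 'y)" where
  "train_data X Y ntr \<omega> = (\<lambda>i\<in>I_train ntr. (X i \<omega>, Y i \<omega>))"

definition s_hat ::
  "((nat \<Rightarrow> 'x \<times> 'y) \<Rightarrow> 'x \<times> 'y \<Rightarrow> real) \<Rightarrow> (nat \<Rightarrow> 'w \<Rightarrow> 'x) \<Rightarrow> (nat \<Rightarrow> 'w \<Rightarrow> 'y)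
    \<Rightarrow> nat \<Rightarrow> 'w \<Rightarrow> 'x \<Rightarrow> 'y \<Rightarrow> real" where
  "s_hat s X Y ntr \<omega> x y = s (train_data X Y ntr \<omega>) (x, y)"

definition q_hat_cal ::
  "((nat \<Rightarrow> 'x \<times> 'y) \<Rightarrow> 'x \<times> 'y \<Rightarrow> real) \<Rightarrow> (nat \<Rightarrow> 'w \<Rightarrow> 'x) \<Rightarrow> (nat \<Rightarrow> 'w \<Rightarrow> 'y)
    \<Rightarrow> nat \<Rightarrow> nat \<Rightarrow> real \<Rightarrow> 'w \<Rightarrow> real" where
  "q_hat_cal s X Y ntr ncal \<phi> \<omega> =
     Inf {t::real. (1 / real ncal) * (\<Sum>i\<in>I_cal ntr ncal.
            (if s_hat s X Y ntr \<omega> (X i \<omega>) (Y i \<omega>) \<le> t then 1 else 0)) \<ge> \<phi>}"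

definition conf_set ::
  "((nat \<Rightarrow> 'x \<times> 'y) \<Rightarrow> 'x \<times> 'y \<Rightarrow> real) \<Rightarrow> (nat \<Rightarrow> 'w \<Rightarrow> 'x) \<Rightarrow> (nat \<Rightarrow> 'w \<Rightarrow> 'y)
    \<Rightarrow> nat \<Rightarrow> nat \<Rightarrow> real \<Rightarrow> 'w \<Rightarrow> 'x \<Rightarrow> 'y set" where
  "conf_set s X Y ntr ncal \<phi> \<omega> x =
     {y. s_hat s X Y ntr \<omega> x y \<le> q_hat_cal s X Y ntr ncal \<phi> \<omega>}"

text \<open>P_{q,train}: conditional probability of s_hat_train(X_*,Y_*) \<le> q_train given the
  training data. Since (X_*,Y_*) is independent of the sample, the function
  t \<mapsto> P[s(t,(X_*,Y_*)) \<le> q(t)] evaluated at the training sample is a version of it.\<close>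
definition P_q_train ::
  "'w measure \<Rightarrow> ((nat \<Rightarrow> 'x \<times> 'y) \<Rightarrow> 'x \<times> 'y \<Rightarrow> real) \<Rightarrow> ((nat \<Rightarrow> 'x \<times> 'y) \<Rightarrow> real)
    \<Rightarrow> (nat \<Rightarrow> 'w \<Rightarrow> 'x) \<Rightarrow> (nat \<Rightarrow> 'w \<Rightarrow> 'y) \<Rightarrow> ('w \<Rightarrow> 'x) \<Rightarrow> ('w \<Rightarrow> 'y)
    \<Rightarrow> nat \<Rightarrow> 'w \<Rightarrow> real" where
  "P_q_train M s q X Y Xs Ys ntr \<omega> =
     (let t = train_data X Y ntr \<omega> in
        measure M {\<omega>' \<in> space M. s t (Xs \<omega>', Ys \<omega>') \<le> q t})"

text \<open>Independence of two random elements with possibly different value spaces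
  (the library's indep_var requires a common value type).\<close>
definition indep_rv :: "'w measure \<Rightarrow> 'a measure \<Rightarrow> ('w \<Rightarrow> 'a) \<Rightarrow> 'b measure \<Rightarrow> ('w \<Rightarrow> 'b) \<Rightarrow> bool" where
  "indep_rv M Ma A Mb B \<longleftrightarrow> A \<in> measurable M Ma \<and> B \<in> measurable M Mb \<and>
     (\<forall>S\<in>sets Ma. \<forall>T\<in>sets Mb.
        measure M (A -` S \<inter> B -` T \<inter> space M) = measure M (A -` S \<inter> space M) * measure M (B -` T \<inter> space M))"

end

theory Submission
  imports Defs
begin


lemma step_quantile:
  fixes a :: "nat \<Rightarrow> real" and I :: "nat set" and \<phi> :: real
  assumes fin: "finite I" and ne: "I \<noteq> {}" and ph: "0 < \<phi>" "\<phi> \<le> 1"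
  shows "\<exists>m. {c. (1 / real (card I)) * (\<Sum>i\<in>I. if a i \<le> c then 1 else (0::real)) \<ge> \<phi>} = {m..}"
proof -
  define G where "G = (\<lambda>c. (1 / real (card I)) * (\<Sum>i\<in>I. if a i \<le> c then 1 else (0::real)))"
  define S where "S = {c. G c \<ge> \<phi>}"
  define A where "A = a ` I"
  have finA: "finite A" "A \<noteq> {}" using fin ne by (auto simp: A_def)
  have cardpos: "card I > 0" using fin ne by (simp add: card_gt_0_iff)
  have mono: "G c \<le> G d" if "c \<le> d" for c d
    unfolding G_def using that cardpos
    by (intro mult_left_mono sum_mono) auto
  have "G (Max A) = 1"
  proof -
    have "\<forall>i\<in>I. a i \<le> Max A" using finA by (auto simp: A_def)
    then have "(\<Sum>i\<in>I. if a i \<le> Max A then 1 else (0::real)) = real (card I)" by simp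
    then show ?thesis using cardpos by (simp add: G_def)
  qed
  then have MS: "Max A \<in> S \<inter> A" using ph finA by (simp add: S_def)
  define m where "m = Min (S \<inter> A)"
  have mSA: "m \<in> S \<inter> A" unfolding m_def using MS finA by (intro Min_in) (simp, blast)
  have "S = {m..}"
  proof
    show "{m..} \<subseteq> S"
    proof
      fix c assume "c \<in> {m..}"
      then have "G m \<le> G c" using mono by simp
      then show "c \<in> S" using mSA by (simp add: S_def)
    qed
  next
    show "S \<subseteq> {m..}"
    proof
      fix c assume cS: "c \<in> S"
      show "c \<in> {m..}"
      proof (cases "{x\<in>A. x \<le> c} = {}")
        case True
        then have "\<forall>i\<in>I. \<not> a i \<le> c" by (auto simp: A_def)
        then have "G c = 0" by (simp add: G_def)
        then show ?thesis using cS ph by (simp add: S_def)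
      next
        case False
        define c' where "c' = Max {x\<in>A. x \<le> c}"
        have c'in: "c' \<in> {x\<in>A. x \<le> c}" unfolding c'_def using False finA by (intro Max_in) auto
        have "\<forall>i\<in>I. (a i \<le> c) = (a i \<le> c')"
        proof
          fix i assume "i \<in> I"
          then have "a i \<in> A" by (simp add: A_def)
          show "(a i \<le> c) = (a i \<le> c')"
          proof
            assume "a i \<le> c" then show "a i \<le> c'" using \<open>a i \<in> A\<close> finA unfolding c'_def by (intro Max_ge) auto
          next
            assume "a i \<le> c'" then show "a i \<le> c" using c'in unfolding c'_def by auto
          qed
        qed
        then have "G c' = G c" unfolding G_def by (intro arg_cong[where f="(*) _"] sum.cong) auto
        then have "c' \<in> S \<inter> A" using cS c'in by (simp add: S_def)
        then have "m \<le> c'" unfolding m_def using finA by (intro Min_le) auto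
        then show ?thesis using c'in by simp
      qed
    qed
  qed
  then show ?thesis unfolding S_def G_def by blast
qed

lemma step_quantile_Inf:
  fixes a :: "nat \<Rightarrow> real" and I :: "nat set" and \<phi> :: real
  assumes fin: "finite I" and ne: "I \<noteq> {}" and ph: "0 < \<phi>" "\<phi> \<le> 1" and n: "card I = n"
  shows "Inf {c. (1 / real n) * (\<Sum>i\<in>I. if a i \<le> c then 1 else (0::real)) \<ge> \<phi>} \<le> c \<longleftrightarrow>
         (1 / real n) * (\<Sum>i\<in>I. if a i \<le> c then 1 else (0::real)) \<ge> \<phi>"
proof -
  obtain m where m: "{c. (1 / real (card I)) * (\<Sum>i\<in>I. if a i \<le> c then 1 else (0::real)) \<ge> \<phi>} = {m..}"
    using step_quantile[OF fin ne ph] by blast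
  have "(1 / real n) * (\<Sum>i\<in>I. if a i \<le> c then 1 else (0::real)) \<ge> \<phi> \<longleftrightarrow> c \<in> {m..}"
    using m n by blast
  then show ?thesis using m n by simp
qed

lemma cdf_mono:
  assumes P: "prob_space M" and g: "g \<in> borel_measurable M" and uv: "u \<le> v"
  shows "measure M {\<omega>\<in>space M. g \<omega> \<le> u} \<le> measure M {\<omega>\<in>space M. g \<omega> \<le> (v::real)}"
proof -
  interpret prob_space M by (rule P)
  show ?thesis using uv g by (intro finite_measure_mono) auto
qed

lemma cdf_quantile:
  assumes P: "prob_space M" and g: "g \<in> borel_measurable M" and L: "0 < L" "L < 1"
  shows "L \<le> measure M {\<omega>\<in>space M. g \<omega> \<le> u} \<longleftrightarrow>
         Inf {u. L \<le> measure M {\<omega>\<in>space M. g \<omega> \<le> u}} \<le> (u::real)"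
proof -
  interpret prob_space M by (rule P)
  define F where "F = (\<lambda>u. measure M {\<omega>\<in>space M. g \<omega> \<le> u})"
  define S where "S = {u. L \<le> F u}"
  have mono: "F u \<le> F v" if "u \<le> v" for u v
    unfolding F_def using cdf_mono[OF P g that] .
  have meas: "{\<omega>\<in>space M. g \<omega> \<le> u} \<in> sets M" for u using g by measurable
  have "(\<lambda>n. F (real n)) \<longlonglongrightarrow> measure M (\<Union>n. {\<omega>\<in>space M. g \<omega> \<le> real n})"
    unfolding F_def
  proof (rule finite_Lim_measure_incseq)
    show "range (\<lambda>n. {\<omega>\<in>space M. g \<omega> \<le> real n}) \<subseteq> sets M" using meas by auto
    show "incseq (\<lambda>n. {\<omega>\<in>space M. g \<omega> \<le> real n})"
      by (rule incseq_SucI) auto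
  qed
  moreover have "(\<Union>n. {\<omega>\<in>space M. g \<omega> \<le> real n}) = space M"
  proof -
    have "\<exists>n. g \<omega> \<le> real n" for \<omega> using real_arch_simple by blast
    then show ?thesis by auto
  qed
  ultimately have "(\<lambda>n. F (real n)) \<longlonglongrightarrow> 1" by (simp add: prob_space)
  from order_tendstoD(1)[OF this L(2)] obtain n0 where n0: "L < F (real n0)"
    by (auto simp: eventually_sequentially)
  have "(\<lambda>n. F (- real n)) \<longlonglongrightarrow> measure M (\<Inter>n. {\<omega>\<in>space M. g \<omega> \<le> - real n})"
    unfolding F_def
  proof (rule finite_Lim_measure_decseq)
    show "range (\<lambda>n. {\<omega>\<in>space M. g \<omega> \<le> - real n}) \<subseteq> sets M" using meas by auto
    show "decseq (\<lambda>n. {\<omega>\<in>space M. g \<omega> \<le> - real n})"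
      by (rule decseq_SucI) auto
  qed
  moreover have "(\<Inter>n. {\<omega>\<in>space M. g \<omega> \<le> - real n}) = {}"
  proof -
    have "\<omega> \<notin> (\<Inter>n. {\<omega>\<in>space M. g \<omega> \<le> - real n})" for \<omega>
    proof
      assume w: "\<omega> \<in> (\<Inter>n. {\<omega>\<in>space M. g \<omega> \<le> - real n})"
      obtain n where n: "- g \<omega> \<le> real n" using real_arch_simple by blast
      have "g \<omega> \<le> - real (Suc n)" using w by blast
      then show False using n by simp
    qed
    then show ?thesis by blast
  qed
  ultimately have "(\<lambda>n. F (- real n)) \<longlonglongrightarrow> 0" by simp
  from order_tendstoD(2)[OF this L(1)] obtain n1 where n1: "F (- real n1) < L"
    by (auto simp: eventually_sequentially)
  have Sne: "S \<noteq> {}" using n0 by (auto simp: S_def intro!: exI[of _ "real n0"])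
  have lb: "- real n1 \<le> u" if "u \<in> S" for u
  proof (rule ccontr)
    assume "\<not> - real n1 \<le> u"
    then have "F u \<le> F (- real n1)" by (intro mono) simp
    then show False using that n1 by (simp add: S_def)
  qed
  then have bdd: "bdd_below S" by (rule bdd_belowI)
  define q where "q = Inf S"
  have "(\<lambda>n. F (q + 1 / (real n + 1))) \<longlonglongrightarrow> measure M (\<Inter>n. {\<omega>\<in>space M. g \<omega> \<le> q + 1 / (real n + 1)})"
    unfolding F_def
  proof (rule finite_Lim_measure_decseq)
    show "range (\<lambda>n. {\<omega>\<in>space M. g \<omega> \<le> q + 1 / (real n + 1)}) \<subseteq> sets M" using meas by auto
    show "decseq (\<lambda>n. {\<omega>\<in>space M. g \<omega> \<le> q + 1 / (real n + 1)})"
    proof (rule decseq_SucI)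
      fix n
      have "1 / (real (Suc n) + 1) \<le> 1 / (real n + 1)" by (intro divide_left_mono) auto
      then show "{\<omega>\<in>space M. g \<omega> \<le> q + 1 / (real (Suc n) + 1)} \<subseteq> {\<omega>\<in>space M. g \<omega> \<le> q + 1 / (real n + 1)}"
        by auto
    qed
  qed
  moreover have "(\<Inter>n. {\<omega>\<in>space M. g \<omega> \<le> q + 1 / (real n + 1)}) = {\<omega>\<in>space M. g \<omega> \<le> q}"
  proof (intro equalityI subsetI)
    fix \<omega> assume w: "\<omega> \<in> (\<Inter>n. {\<omega>\<in>space M. g \<omega> \<le> q + 1 / (real n + 1)})"
    show "\<omega> \<in> {\<omega>\<in>space M. g \<omega> \<le> q}"
    proof (rule ccontr)
      assume "\<omega> \<notin> {\<omega>\<in>space M. g \<omega> \<le> q}"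
      then have pos: "g \<omega> - q > 0" and sp: "\<omega> \<in> space M" using w by auto
      obtain n where "inverse (real (Suc n)) < g \<omega> - q"
        using reals_Archimedean[OF pos] by blast
      then have "1 / (real n + 1) < g \<omega> - q" by (simp add: inverse_eq_divide add.commute)
      moreover have "g \<omega> \<le> q + 1 / (real n + 1)" using w by blast
      ultimately show False by linarith
    qed
  next
    fix \<omega> assume "\<omega> \<in> {\<omega>\<in>space M. g \<omega> \<le> q}"
    then have sp: "\<omega> \<in> space M" and gq: "g \<omega> \<le> q" by auto
    have "g \<omega> \<le> q + 1 / (real n + 1)" for n
    proof -
      have "0 \<le> 1 / (real n + 1)" by simp
      then show ?thesis using gq by linarith
    qed
    then show "\<omega> \<in> (\<Inter>n. {\<omega>\<in>space M. g \<omega> \<le> q + 1 / (real n + 1)})" using sp by blast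
  qed
  ultimately have lim: "(\<lambda>n. F (q + 1 / (real n + 1))) \<longlonglongrightarrow> F q" by (simp add: F_def)
  have "L \<le> F (q + 1 / (real n + 1))" for n
  proof -
    have "q < q + 1 / (real n + 1)" by simp
    then obtain u where "u \<in> S" "u < q + 1 / (real n + 1)"
      unfolding q_def using cInf_lessD[OF Sne] by blast
    then show ?thesis using mono[of u "q + 1 / (real n + 1)"] by (simp add: S_def)
  qed
  then have Fq: "L \<le> F q" using lim by (intro LIMSEQ_le_const) auto
  show ?thesis
  proof
    assume "L \<le> measure M {\<omega>\<in>space M. g \<omega> \<le> u}"
    then have "u \<in> S" by (simp add: S_def F_def)
    then show "Inf {u. L \<le> measure M {\<omega>\<in>space M. g \<omega> \<le> u}} \<le> u"
      using cInf_lower[OF _ bdd] by (simp add: S_def F_def)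
  next
    assume "Inf {u. L \<le> measure M {\<omega>\<in>space M. g \<omega> \<le> u}} \<le> u"
    then have "q \<le> u" by (simp add: q_def S_def F_def)
    then show "L \<le> measure M {\<omega>\<in>space M. g \<omega> \<le> u}" using mono[of q u] Fq by (simp add: F_def)
  qed
qed

lemma cdf_noatom:
  assumes P: "prob_space M" and g: "g \<in> borel_measurable M"
    and le: "\<And>u. u < v \<Longrightarrow> measure M {\<omega>\<in>space M. g \<omega> \<le> u} \<le> U"
    and na: "measure M {\<omega>\<in>space M. g \<omega> = (v::real)} = 0"
  shows "measure M {\<omega>\<in>space M. g \<omega> \<le> v} \<le> U"
proof -
  interpret prob_space M by (rule P)
  have meas: "{\<omega>\<in>space M. g \<omega> \<le> u} \<in> sets M" for u using g by measurable
  have "(\<lambda>n. measure M {\<omega>\<in>space M. g \<omega> \<le> v - 1 / (real n + 1)}) \<longlonglongrightarrow> measure M (\<Union>n. {\<omega>\<in>space M. g \<omega> \<le> v - 1 / (real n + 1)})"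
  proof (rule finite_Lim_measure_incseq)
    show "range (\<lambda>n. {\<omega>\<in>space M. g \<omega> \<le> v - 1 / (real n + 1)}) \<subseteq> sets M" using meas by auto
    show "incseq (\<lambda>n. {\<omega>\<in>space M. g \<omega> \<le> v - 1 / (real n + 1)})"
    proof (rule incseq_SucI)
      fix n
      have "1 / (real (Suc n) + 1) \<le> 1 / (real n + 1)" by (intro divide_left_mono) auto
      then show "{\<omega>\<in>space M. g \<omega> \<le> v - 1 / (real n + 1)} \<subseteq> {\<omega>\<in>space M. g \<omega> \<le> v - 1 / (real (Suc n) + 1)}"
        by auto
    qed
  qed
  moreover have "(\<Union>n. {\<omega>\<in>space M. g \<omega> \<le> v - 1 / (real n + 1)}) = {\<omega>\<in>space M. g \<omega> < v}"
  proof (intro equalityI subsetI)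
    fix \<omega> assume "\<omega> \<in> (\<Union>n. {\<omega>\<in>space M. g \<omega> \<le> v - 1 / (real n + 1)})"
    then obtain n where sp: "\<omega> \<in> space M" and gl: "g \<omega> \<le> v - 1 / (real n + 1)" by auto
    have "0 < 1 / (real n + 1)" by simp
    then have "g \<omega> < v" using gl by linarith
    then show "\<omega> \<in> {\<omega>\<in>space M. g \<omega> < v}" using sp by simp
  next
    fix \<omega> assume "\<omega> \<in> {\<omega>\<in>space M. g \<omega> < v}"
    then have pos: "v - g \<omega> > 0" and sp: "\<omega> \<in> space M" by auto
    obtain n where "inverse (real (Suc n)) < v - g \<omega>"
      using reals_Archimedean[OF pos] by blast
    then have "1 / (real n + 1) < v - g \<omega>" by (simp add: inverse_eq_divide add.commute)
    then show "\<omega> \<in> (\<Union>n. {\<omega>\<in>space M. g \<omega> \<le> v - 1 / (real n + 1)})" using sp by (auto intro!: exI[of _ n])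
  qed
  ultimately have lim: "(\<lambda>n. measure M {\<omega>\<in>space M. g \<omega> \<le> v - 1 / (real n + 1)}) \<longlonglongrightarrow> measure M {\<omega>\<in>space M. g \<omega> < v}"
    by simp
  have "measure M {\<omega>\<in>space M. g \<omega> \<le> v - 1 / (real n + 1)} \<le> U" for n
    by (rule le) simp
  then have lt: "measure M {\<omega>\<in>space M. g \<omega> < v} \<le> U" using lim by (intro LIMSEQ_le_const2) auto
  have "{\<omega>\<in>space M. g \<omega> \<le> v} = {\<omega>\<in>space M. g \<omega> < v} \<union> {\<omega>\<in>space M. g \<omega> = v}" by auto
  then have "measure M {\<omega>\<in>space M. g \<omega> \<le> v} \<le> measure M {\<omega>\<in>space M. g \<omega> < v} + measure M {\<omega>\<in>space M. g \<omega> = v}"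
    using g by (simp add: measure_Un_le)
  then show ?thesis using lt na by simp
qed


lemma ind_meas:
  fixes f g :: "'a \<Rightarrow> real"
  assumes "f \<in> borel_measurable M" "g \<in> borel_measurable M"
  shows "(\<lambda>\<omega>. if f \<omega> \<le> g \<omega> then 1 else (0::real)) \<in> borel_measurable M"
  using assms by measurable

lemma prob_inter_ge:
  assumes "prob_space M" "A \<in> sets M" "B \<in> sets M"
  shows "measure M A + measure M B - 1 \<le> measure M (A \<inter> B)"
proof -
  interpret prob_space M by fact
  have "measure M (A \<union> B) \<le> 1" by simp
  moreover have "measure M (A \<union> B) = measure M A + measure M B - measure M (A \<inter> B)"
    using assms by (simp add: finite_measure_Diff' finite_measure_Union' Int_commute Diff_Int_distrib)
  ultimately show ?thesis by simp
qed

theorem theorem2p2: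
  fixes M :: "'w measure" and MX :: "'x measure" and MY :: "'y measure"
    and X :: "nat \<Rightarrow> 'w \<Rightarrow> 'x" and Y :: "nat \<Rightarrow> 'w \<Rightarrow> 'y"
    and Xs :: "'w \<Rightarrow> 'x" and Ys :: "'w \<Rightarrow> 'y"
    and ntr ncal nte :: nat
    and s :: "(nat \<Rightarrow> 'x \<times> 'y) \<Rightarrow> 'x \<times> 'y \<Rightarrow> real"
    and \<alpha> \<epsilon>cal \<delta>cal \<epsilon>test \<delta>test :: real
  assumes P: "prob_space M"
    and pos: "0 < ntr" "0 < ncal" "0 < nte"
    and measX: "\<And>i. i \<in> {1..ntr + ncal + nte} \<Longrightarrow> X i \<in> measurable M MX"
    and measY: "\<And>i. i \<in> {1..ntr + ncal + nte} \<Longrightarrow> Y i \<in> measurable M MY"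
    and measXs: "Xs \<in> measurable M MX" and measYs: "Ys \<in> measurable M MY"
    and ident: "\<And>i. i \<in> {1..ntr + ncal + nte} \<Longrightarrow>
        distr M (MX \<Otimes>\<^sub>M MY) (\<lambda>\<omega>. (X i \<omega>, Y i \<omega>)) = distr M (MX \<Otimes>\<^sub>M MY) (\<lambda>\<omega>. (Xs \<omega>, Ys \<omega>))"
    and indep: "indep_rv M
        (PiM {1..ntr + ncal + nte} (\<lambda>_. MX \<Otimes>\<^sub>M MY)) (\<lambda>\<omega>. \<lambda>i\<in>{1..ntr + ncal + nte}. (X i \<omega>, Y i \<omega>))
        (MX \<Otimes>\<^sub>M MY) (\<lambda>\<omega>. (Xs \<omega>, Ys \<omega>))"
    and meas_s: "(\<lambda>(t, z). s t z) \<in> borel_measurable (PiM (I_train ntr) (\<lambda>_. MX \<Otimes>\<^sub>M MY) \<Otimes>\<^sub>M (MX \<Otimes>\<^sub>M MY))"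
    and \<alpha>: "0 < \<alpha>" "\<alpha> < 1"
    and \<epsilon>\<delta>cal: "0 < \<epsilon>cal" "\<epsilon>cal < 1" "0 < \<delta>cal" "\<delta>cal < 1"
    and \<epsilon>\<delta>test: "0 < \<epsilon>test" "\<epsilon>test < 1" "0 < \<delta>test" "\<delta>test < 1"
    and conc_cal: "\<And>q. q \<in> borel_measurable (PiM (I_train ntr) (\<lambda>_. MX \<Otimes>\<^sub>M MY)) \<Longrightarrow>
        measure M {\<omega> \<in> space M.
          \<bar>(1 / real ncal) * (\<Sum>i\<in>I_cal ntr ncal.
              (if s_hat s X Y ntr \<omega> (X i \<omega>) (Y i \<omega>) \<le> q (train_data X Y ntr \<omega>) then 1 else 0))
           - P_q_train M s q X Y Xs Ys ntr \<omega>\<bar> \<le> \<epsilon>cal} \<ge> 1 - \<delta>cal"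
    and conc_test: "\<And>q. q \<in> borel_measurable (PiM (I_train ntr) (\<lambda>_. MX \<Otimes>\<^sub>M MY)) \<Longrightarrow>
        measure M {\<omega> \<in> space M.
          \<bar>P_q_train M s q X Y Xs Ys ntr \<omega>
           - (1 / real nte) * (\<Sum>i\<in>I_test ntr ncal nte.
              (if s_hat s X Y ntr \<omega> (X i \<omega>) (Y i \<omega>) \<le> q (train_data X Y ntr \<omega>) then 1 else 0))\<bar>
           \<le> \<epsilon>test} \<ge> 1 - \<delta>test"
  shows "measure M {\<omega> \<in> space M.
           (1 / real nte) * (\<Sum>i\<in>I_test ntr ncal nte.
              (if Y i \<omega> \<in> conf_set s X Y ntr ncal (1 - \<alpha>) \<omega> (X i \<omega>) then 1 else 0))
           \<ge> 1 - \<alpha> - (\<epsilon>cal + \<epsilon>test)} \<ge> 1 - \<delta>cal - \<delta>test \<and>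
         ((AE \<omega> in M. \<forall>r::real.
            measure M {\<omega>' \<in> space M. s (train_data X Y ntr \<omega>) (Xs \<omega>', Ys \<omega>') = r} = 0) \<longrightarrow>
         measure M {\<omega> \<in> space M.
           \<bar>(1 / real nte) * (\<Sum>i\<in>I_test ntr ncal nte.
              (if Y i \<omega> \<in> conf_set s X Y ntr ncal (1 - \<alpha>) \<omega> (X i \<omega>) then 1 else 0))
            - (1 - \<alpha>)\<bar> \<le> \<epsilon>cal + \<epsilon>test} \<ge> 1 - 2 * \<delta>cal - 2 * \<delta>test)"
proof -
  interpret prob_space M by (rule P)
  define N where "N = MX \<Otimes>\<^sub>M MY"
  define T where "T = PiM (I_train ntr) (\<lambda>_. N)"
  define n where "n = ntr + ncal + nte"
  define tr where "tr = train_data X Y ntr"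
  define F where "F = (\<lambda>t c. measure M {\<omega>'\<in>space M. s t (Xs \<omega>', Ys \<omega>') \<le> c})"
  define sc where "sc = (\<lambda>i \<omega>. s_hat s X Y ntr \<omega> (X i \<omega>) (Y i \<omega>))"
  define Fc where "Fc = (\<lambda>\<omega> c. (1 / real ncal) * (\<Sum>i\<in>I_cal ntr ncal. if sc i \<omega> \<le> c then 1 else (0::real)))"
  define Ft where "Ft = (\<lambda>\<omega> c. (1 / real nte) * (\<Sum>i\<in>I_test ntr ncal nte. if sc i \<omega> \<le> c then 1 else (0::real)))"
  define qh where "qh = q_hat_cal s X Y ntr ncal (1 - \<alpha>)"
  define cov where "cov = (\<lambda>\<omega>. (1 / real nte) * (\<Sum>i\<in>I_test ntr ncal nte.
              (if Y i \<omega> \<in> conf_set s X Y ntr ncal (1 - \<alpha>) \<omega> (X i \<omega>) then 1 else (0::real))))"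
  have Itr: "I_train ntr \<subseteq> {1..n}" by (auto simp: I_train_def n_def)
  have Ical: "I_cal ntr ncal \<subseteq> {1..n}" "finite (I_cal ntr ncal)" "I_cal ntr ncal \<noteq> {}" "card (I_cal ntr ncal) = ncal"
    using pos by (auto simp: I_cal_def n_def)
  have Ite: "I_test ntr ncal nte \<subseteq> {1..n}" "finite (I_test ntr ncal nte)" "I_test ntr ncal nte \<noteq> {}" "card (I_test ntr ncal nte) = nte"
    using pos by (auto simp: I_test_def n_def)
  have XYmeas: "(\<lambda>\<omega>. (X i \<omega>, Y i \<omega>)) \<in> measurable M N" if "i \<in> {1..n}" for i
    using measX[of i] measY[of i] that unfolding N_def n_def by (auto intro!: measurable_Pair)
  have Zmeas: "(\<lambda>\<omega>. (Xs \<omega>, Ys \<omega>)) \<in> measurable M N"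
    using measXs measYs unfolding N_def by (auto intro!: measurable_Pair)
  have tr_meas: "tr \<in> measurable M T"
    unfolding tr_def train_data_def[abs_def] T_def
    by (rule measurable_restrict) (use XYmeas Itr in blast)
  have ms: "(\<lambda>(t, z). s t z) \<in> borel_measurable (T \<Otimes>\<^sub>M N)" using meas_s by (simp add: T_def N_def)
  have sc_meas: "sc i \<in> borel_measurable M" if "i \<in> {1..n}" for i
  proof -
    have "(\<lambda>\<omega>. (tr \<omega>, (X i \<omega>, Y i \<omega>))) \<in> measurable M (T \<Otimes>\<^sub>M N)"
      using tr_meas XYmeas[OF that] by (auto intro!: measurable_Pair)
    from measurable_compose[OF this ms] show ?thesis
      by (simp add: sc_def s_hat_def tr_def[symmetric] cong: measurable_cong)
  qed
  have g_meas: "(\<lambda>\<omega>'. s t (Xs \<omega>', Ys \<omega>')) \<in> borel_measurable M" if "t \<in> space T" for t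
  proof -
    have "(\<lambda>z. s t z) \<in> borel_measurable N" using measurable_Pair2[OF ms that] by simp
    from measurable_compose[OF Zmeas this] show ?thesis .
  qed
  have F_meas: "(\<lambda>t. F t c) \<in> borel_measurable T" for c
  proof -
    define D where "D = distr M N (\<lambda>\<omega>. (Xs \<omega>, Ys \<omega>))"
    interpret D: prob_space D unfolding D_def by (rule prob_space_distr[OF Zmeas])
    define Q where "Q = {x \<in> space (T \<Otimes>\<^sub>M N). (\<lambda>(t, z). s t z) x \<le> c}"
    have Q: "Q \<in> sets (T \<Otimes>\<^sub>M N)" unfolding Q_def using ms by measurable
    have "sets (T \<Otimes>\<^sub>M D) = sets (T \<Otimes>\<^sub>M N)"
      by (intro sets_pair_measure_cong) (simp_all add: D_def)
    with Q have Q': "Q \<in> sets (T \<Otimes>\<^sub>M D)" by simp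
    have "(\<lambda>t. enn2real (emeasure D (Pair t -` Q))) \<in> borel_measurable T"
      using D.measurable_emeasure_Pair[OF Q'] by measurable
    then have "(\<lambda>t. measure D (Pair t -` Q)) \<in> borel_measurable T" by (simp add: measure_def)
    moreover have "measure D (Pair t -` Q) = F t c" if t: "t \<in> space T" for t
    proof -
      have eq: "Pair t -` Q = {z \<in> space N. s t z \<le> c}" using t by (auto simp: Q_def space_pair_measure)
      have st[measurable]: "s t \<in> borel_measurable N" using measurable_Pair2[OF ms t] by simp
      have "{z \<in> space N. s t z \<le> c} \<in> sets N" by measurable
      then have "measure D (Pair t -` Q) = measure M ((\<lambda>\<omega>. (Xs \<omega>, Ys \<omega>)) -` {z \<in> space N. s t z \<le> c} \<inter> space M)"
        unfolding eq D_def by (rule measure_distr[OF Zmeas])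
      also have "(\<lambda>\<omega>. (Xs \<omega>, Ys \<omega>)) -` {z \<in> space N. s t z \<le> c} \<inter> space M = {\<omega>'\<in>space M. s t (Xs \<omega>', Ys \<omega>') \<le> c}"
        using measurable_space[OF Zmeas] by auto
      finally show ?thesis by (simp add: F_def)
    qed
    ultimately show ?thesis by (simp cong: measurable_cong)
  qed
  have key: "qh \<omega> \<le> c \<longleftrightarrow> 1 - \<alpha> \<le> Fc \<omega> c" for \<omega> c
    unfolding qh_def q_hat_cal_def Fc_def sc_def
    using step_quantile_Inf[OF Ical(2,3), of "1 - \<alpha>" ncal "\<lambda>i. s_hat s X Y ntr \<omega> (X i \<omega>) (Y i \<omega>)" c] \<alpha> Ical(4)
    by simp
  have cov_eq: "cov \<omega> = Ft \<omega> (qh \<omega>)" for \<omega>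
    by (simp add: cov_def Ft_def conf_set_def sc_def qh_def)
  have Fc_mono: "Fc \<omega> c \<le> Fc \<omega> d" if "c \<le> d" for \<omega> c d
    unfolding Fc_def using that by (intro mult_left_mono sum_mono) auto
  have Ft_mono: "Ft \<omega> c \<le> Ft \<omega> d" if "c \<le> d" for \<omega> c d
    unfolding Ft_def using that by (intro mult_left_mono sum_mono) auto
  have Ft_le1: "Ft \<omega> c \<le> 1" for \<omega> c
  proof -
    have "(\<Sum>i\<in>I_test ntr ncal nte. if sc i \<omega> \<le> c then 1 else (0::real)) \<le> (\<Sum>i\<in>I_test ntr ncal nte. 1)"
      by (intro sum_mono) auto
    then show ?thesis using Ite(4) pos by (simp add: Ft_def field_simps)
  qed
  have Ft_ge0: "0 \<le> Ft \<omega> c" for \<omega> c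
    unfolding Ft_def by (intro mult_nonneg_nonneg sum_nonneg) auto
  have Fc_hmeas: "(\<lambda>\<omega>. Fc \<omega> (h \<omega>)) \<in> borel_measurable M" if "h \<in> borel_measurable M" for h
    unfolding Fc_def
    by (intro borel_measurable_times borel_measurable_const borel_measurable_sum ind_meas that sc_meas)
       (use Ical(1) in blast)
  have Ft_hmeas: "(\<lambda>\<omega>. Ft \<omega> (h \<omega>)) \<in> borel_measurable M" if "h \<in> borel_measurable M" for h
    unfolding Ft_def
    by (intro borel_measurable_times borel_measurable_const borel_measurable_sum ind_meas that sc_meas)
       (use Ite(1) in blast)
  have qh_meas: "qh \<in> borel_measurable M"
    unfolding borel_measurable_iff_le
  proof
    fix a
    have "{w \<in> space M. qh w \<le> a} = {w \<in> space M. 1 - \<alpha> \<le> Fc w a}" using key by blast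
    moreover have m[measurable]: "(\<lambda>w. Fc w a) \<in> borel_measurable M" using Fc_hmeas[of "\<lambda>_. a"] by simp
    have "{w \<in> space M. 1 - \<alpha> \<le> Fc w a} \<in> sets M" by measurable
    ultimately show "{w \<in> space M. qh w \<le> a} \<in> sets M" by simp
  qed
  have cov_meas: "cov \<in> borel_measurable M"
  proof -
    have "cov = (\<lambda>\<omega>. Ft \<omega> (qh \<omega>))" using cov_eq by auto
    then show ?thesis using Ft_hmeas[OF qh_meas] by simp
  qed
  have Pq: "P_q_train M s q X Y Xs Ys ntr \<omega> = F (tr \<omega>) (q (tr \<omega>))" for q \<omega>
    by (simp add: P_q_train_def F_def tr_def Let_def)
  have cc: "1 - \<delta>cal \<le> measure M {\<omega> \<in> space M. \<bar>Fc \<omega> (q (tr \<omega>)) - F (tr \<omega>) (q (tr \<omega>))\<bar> \<le> \<epsilon>cal}"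
    if "q \<in> borel_measurable T" for q
    using conc_cal[of q] that unfolding Pq by (simp add: T_def N_def Fc_def sc_def s_hat_def tr_def)
  have ct: "1 - \<delta>test \<le> measure M {\<omega> \<in> space M. \<bar>F (tr \<omega>) (q (tr \<omega>)) - Ft \<omega> (q (tr \<omega>))\<bar> \<le> \<epsilon>test}"
    if "q \<in> borel_measurable T" for q
    using conc_test[of q] that unfolding Pq by (simp add: T_def N_def Ft_def sc_def s_hat_def tr_def)
  have pos_sets: "A \<in> sets M" if "1 - d \<le> measure M A" "d < 1" for A d
    using that measure_notin_sets[of A M] by force
  have trsp: "tr \<omega> \<in> space T" if "\<omega> \<in> space M" for \<omega> using measurable_space[OF tr_meas that] .
  have quant: "L \<le> F t u \<longleftrightarrow> Inf {u. L \<le> F t u} \<le> u" if "t \<in> space T" "0 < L" "L < 1" for t L u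
    unfolding F_def by (rule cdf_quantile[OF P g_meas[OF that(1)] that(2,3)])
  have quant_meas: "(\<lambda>t. Inf {u. L \<le> F t u}) \<in> borel_measurable T" if "0 < L" "L < 1" for L
    unfolding borel_measurable_iff_le
  proof
    fix a
    have "{t \<in> space T. Inf {u. L \<le> F t u} \<le> a} = {t \<in> space T. L \<le> F t a}" using quant that by blast
    moreover have m[measurable]: "(\<lambda>t. F t a) \<in> borel_measurable T" by (rule F_meas)
    have "{t \<in> space T. L \<le> F t a} \<in> sets T" by measurable
    ultimately show "{t \<in> space T. Inf {u. L \<le> F t u} \<le> a} \<in> sets T" by simp
  qed
  have G1m: "{\<omega>\<in>space M. 1 - \<alpha> - (\<epsilon>cal + \<epsilon>test) \<le> cov \<omega>} \<in> sets M" using cov_meas by measurable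
  have lower: "1 - \<delta>cal - \<delta>test \<le> measure M {\<omega>\<in>space M. 1 - \<alpha> - (\<epsilon>cal + \<epsilon>test) \<le> cov \<omega>}"
  proof (cases "1 - \<alpha> - \<epsilon>cal \<le> 0")
    case True
    have "1 - \<alpha> - (\<epsilon>cal + \<epsilon>test) \<le> cov \<omega>" for \<omega>
      using Ft_ge0[of \<omega> "qh \<omega>"] cov_eq[of \<omega>] True \<epsilon>\<delta>test(1) by linarith
    then have "{\<omega>\<in>space M. 1 - \<alpha> - (\<epsilon>cal + \<epsilon>test) \<le> cov \<omega>} = space M" by auto
    then show ?thesis using \<epsilon>\<delta>cal \<epsilon>\<delta>test by (simp add: prob_space)
  next
    case False
    define L where "L = 1 - \<alpha> - \<epsilon>cal"
    have L: "0 < L" "L < 1" using False \<alpha> \<epsilon>\<delta>cal by (auto simp: L_def)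
    define q where "q = (\<lambda>t. Inf {u. L \<le> F t u})"
    have qm: "q \<in> borel_measurable T" unfolding q_def by (rule quant_meas[OF L])
    have qk_m: "(\<lambda>t. q t - 1 / (real k + 1)) \<in> borel_measurable T" for k using qm by measurable
    have qF: "L \<le> F t u \<longleftrightarrow> q t \<le> u" if "t \<in> space T" for t u unfolding q_def by (rule quant[OF that L])
    define Et where "Et = {\<omega> \<in> space M. \<bar>F (tr \<omega>) (q (tr \<omega>)) - Ft \<omega> (q (tr \<omega>))\<bar> \<le> \<epsilon>test}"
    have Et: "1 - \<delta>test \<le> measure M Et" unfolding Et_def by (rule ct[OF qm])
    have Etm: "Et \<in> sets M" using pos_sets[OF Et] \<epsilon>\<delta>test by simp
    define B where "B = (\<lambda>k. {\<omega>\<in>space M. Fc \<omega> (q (tr \<omega>) - 1 / (real k + 1)) < 1 - \<alpha>})"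
    have Bm: "B k \<in> sets M" for k
    proof -
      have "(\<lambda>\<omega>. q (tr \<omega>) - 1 / (real k + 1)) \<in> borel_measurable M"
        using measurable_compose[OF tr_meas qk_m[of k]] by simp
      note m[measurable] = Fc_hmeas[OF this]
      show ?thesis unfolding B_def by measurable
    qed
    have Bdec: "decseq B"
    proof (rule decseq_SucI)
      fix k
      have "1 / (real (Suc k) + 1) \<le> 1 / (real k + 1)" by (intro divide_left_mono) auto
      then have le: "q t - 1 / (real k + 1) \<le> q t - 1 / (real (Suc k) + 1)" for t by linarith
      show "B (Suc k) \<subseteq> B k"
      proof
        fix \<omega> assume "\<omega> \<in> B (Suc k)"
        moreover have "Fc \<omega> (q (tr \<omega>) - 1 / (real k + 1)) \<le> Fc \<omega> (q (tr \<omega>) - 1 / (real (Suc k) + 1))"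
          by (rule Fc_mono[OF le])
        ultimately show "\<omega> \<in> B k" unfolding B_def by auto
      qed
    qed
    have Bmeas: "1 - \<delta>cal \<le> measure M (B k)" for k
    proof -
      have "{\<omega> \<in> space M. \<bar>Fc \<omega> (q (tr \<omega>) - 1 / (real k + 1)) - F (tr \<omega>) (q (tr \<omega>) - 1 / (real k + 1))\<bar> \<le> \<epsilon>cal} \<subseteq> B k"
      proof
        fix \<omega> assume w: "\<omega> \<in> {\<omega> \<in> space M. \<bar>Fc \<omega> (q (tr \<omega>) - 1 / (real k + 1)) - F (tr \<omega>) (q (tr \<omega>) - 1 / (real k + 1))\<bar> \<le> \<epsilon>cal}"
        then have sp: "\<omega> \<in> space M" and d: "\<bar>Fc \<omega> (q (tr \<omega>) - 1 / (real k + 1)) - F (tr \<omega>) (q (tr \<omega>) - 1 / (real k + 1))\<bar> \<le> \<epsilon>cal" by auto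
        have "0 < 1 / (real k + 1)" by simp
        then have "\<not> q (tr \<omega>) \<le> q (tr \<omega>) - 1 / (real k + 1)" by linarith
        then have "F (tr \<omega>) (q (tr \<omega>) - 1 / (real k + 1)) < L" using qF[OF trsp[OF sp]] by (meson not_le)
        then have "Fc \<omega> (q (tr \<omega>) - 1 / (real k + 1)) < 1 - \<alpha>" using d unfolding L_def by (simp add: abs_le_iff)
        then show "\<omega> \<in> B k" using sp by (simp add: B_def)
      qed
      then have "measure M {\<omega> \<in> space M. \<bar>Fc \<omega> (q (tr \<omega>) - 1 / (real k + 1)) - F (tr \<omega>) (q (tr \<omega>) - 1 / (real k + 1))\<bar> \<le> \<epsilon>cal} \<le> measure M (B k)"
        by (intro finite_measure_mono Bm)
      with cc[OF qk_m[of k]] show ?thesis by simp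
    qed
    have lim: "(\<lambda>k. measure M (B k)) \<longlonglongrightarrow> measure M (\<Inter>k. B k)"
      by (rule finite_Lim_measure_decseq) (use Bm Bdec in auto)
    have Binf: "1 - \<delta>cal \<le> measure M (\<Inter>k. B k)"
      by (rule LIMSEQ_le_const[OF lim]) (use Bmeas in auto)
    have sub: "(\<Inter>k. B k) \<inter> Et \<subseteq> {\<omega>\<in>space M. 1 - \<alpha> - (\<epsilon>cal + \<epsilon>test) \<le> cov \<omega>}"
    proof
      fix \<omega> assume w: "\<omega> \<in> (\<Inter>k. B k) \<inter> Et"
      then have sp: "\<omega> \<in> space M" by (auto simp: Et_def)
      have qq: "q (tr \<omega>) \<le> qh \<omega>"
      proof (rule ccontr)
        assume "\<not> q (tr \<omega>) \<le> qh \<omega>"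
        then have pos': "q (tr \<omega>) - qh \<omega> > 0" by simp
        obtain k where "inverse (real (Suc k)) < q (tr \<omega>) - qh \<omega>"
          using reals_Archimedean[OF pos'] by blast
        then have "1 / (real k + 1) < q (tr \<omega>) - qh \<omega>" by (simp add: inverse_eq_divide add.commute)
        then have "qh \<omega> \<le> q (tr \<omega>) - 1 / (real k + 1)" by simp
        then have "Fc \<omega> (qh \<omega>) \<le> Fc \<omega> (q (tr \<omega>) - 1 / (real k + 1))" by (rule Fc_mono)
        moreover have "1 - \<alpha> \<le> Fc \<omega> (qh \<omega>)" using key by blast
        moreover have "\<omega> \<in> B k" using w by blast
        ultimately show False by (simp add: B_def)
      qed
      have "Ft \<omega> (q (tr \<omega>)) \<le> Ft \<omega> (qh \<omega>)" using qq by (rule Ft_mono)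
      moreover have "L \<le> F (tr \<omega>) (q (tr \<omega>))" using qF[OF trsp[OF sp]] by simp
      moreover have "\<bar>F (tr \<omega>) (q (tr \<omega>)) - Ft \<omega> (q (tr \<omega>))\<bar> \<le> \<epsilon>test" using w by (simp add: Et_def)
      ultimately have "1 - \<alpha> - (\<epsilon>cal + \<epsilon>test) \<le> cov \<omega>" using cov_eq[of \<omega>] unfolding L_def by (simp add: abs_le_iff)
      then show "\<omega> \<in> {\<omega>\<in>space M. 1 - \<alpha> - (\<epsilon>cal + \<epsilon>test) \<le> cov \<omega>}" using sp by simp
    qed
    have "measure M (\<Inter>k. B k) + measure M Et - 1 \<le> measure M ((\<Inter>k. B k) \<inter> Et)"
      by (rule prob_inter_ge[OF P]) (use Bm Etm in auto)
    also have "\<dots> \<le> measure M {\<omega>\<in>space M. 1 - \<alpha> - (\<epsilon>cal + \<epsilon>test) \<le> cov \<omega>}"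
      by (rule finite_measure_mono[OF sub G1m])
    finally show ?thesis using Binf Et by linarith
  qed
  have G2m: "{\<omega>\<in>space M. cov \<omega> \<le> 1 - \<alpha> + (\<epsilon>cal + \<epsilon>test)} \<in> sets M" using cov_meas by measurable
  have upper: "1 - \<delta>cal - \<delta>test \<le> measure M {\<omega>\<in>space M. cov \<omega> \<le> 1 - \<alpha> + (\<epsilon>cal + \<epsilon>test)}"
    if AEc: "AE \<omega> in M. \<forall>r::real.
            measure M {\<omega>' \<in> space M. s (train_data X Y ntr \<omega>) (Xs \<omega>', Ys \<omega>') = r} = 0"
  proof (cases "1 \<le> 1 - \<alpha> + \<epsilon>cal")
    case True
    have "cov \<omega> \<le> 1 - \<alpha> + (\<epsilon>cal + \<epsilon>test)" for \<omega>
      using Ft_le1[of \<omega> "qh \<omega>"] cov_eq[of \<omega>] True \<epsilon>\<delta>test(1) by linarith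
    then have "{\<omega>\<in>space M. cov \<omega> \<le> 1 - \<alpha> + (\<epsilon>cal + \<epsilon>test)} = space M" by auto
    then show ?thesis using \<epsilon>\<delta>cal \<epsilon>\<delta>test by (simp add: prob_space)
  next
    case False
    define U where "U = 1 - \<alpha> + \<epsilon>cal"
    have U: "0 < U" "U < 1" using False \<alpha> \<epsilon>\<delta>cal by (auto simp: U_def)
    define q where "q = (\<lambda>t. Inf {u. U \<le> F t u})"
    have qm: "q \<in> borel_measurable T" unfolding q_def by (rule quant_meas[OF U])
    have qF: "U \<le> F t u \<longleftrightarrow> q t \<le> u" if "t \<in> space T" for t u unfolding q_def by (rule quant[OF that U])
    define Et where "Et = {\<omega> \<in> space M. \<bar>F (tr \<omega>) (q (tr \<omega>)) - Ft \<omega> (q (tr \<omega>))\<bar> \<le> \<epsilon>test}"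
    have Et: "1 - \<delta>test \<le> measure M Et" unfolding Et_def by (rule ct[OF qm])
    have Etm: "Et \<in> sets M" using pos_sets[OF Et] \<epsilon>\<delta>test by simp
    define Ec where "Ec = {\<omega> \<in> space M. \<bar>Fc \<omega> (q (tr \<omega>)) - F (tr \<omega>) (q (tr \<omega>))\<bar> \<le> \<epsilon>cal}"
    have Ec: "1 - \<delta>cal \<le> measure M Ec" unfolding Ec_def by (rule cc[OF qm])
    have Ecm: "Ec \<in> sets M" using pos_sets[OF Ec] \<epsilon>\<delta>cal by simp
    from AEc obtain Nn where Nn: "{x\<in>space M. \<not> (\<forall>r::real.
            measure M {\<omega>' \<in> space M. s (train_data X Y ntr x) (Xs \<omega>', Ys \<omega>') = r} = 0)} \<subseteq> Nn"
        "emeasure M Nn = 0" "Nn \<in> sets M"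
      by (rule AE_E)
    define G where "G = space M - Nn"
    have Gm: "G \<in> sets M" using Nn(3) by (simp add: G_def)
    have "measure M Nn = 0" using Nn(2) by (simp add: measure_def)
    then have G1: "measure M G = 1" using prob_compl[OF Nn(3)] by (simp add: G_def)
    have sub: "(Ec \<inter> Et) \<inter> G \<subseteq> {\<omega>\<in>space M. cov \<omega> \<le> 1 - \<alpha> + (\<epsilon>cal + \<epsilon>test)}"
    proof
      fix \<omega> assume w: "\<omega> \<in> (Ec \<inter> Et) \<inter> G"
      then have sp: "\<omega> \<in> space M" and nN: "\<omega> \<notin> Nn" by (auto simp: G_def)
      then have na: "measure M {\<omega>' \<in> space M. s (tr \<omega>) (Xs \<omega>', Ys \<omega>') = r} = 0" for r
        using Nn(1) unfolding tr_def by blast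
      define t where "t = tr \<omega>"
      have t: "t \<in> space T" using trsp[OF sp] by (simp add: t_def)
      have Fge: "U \<le> F t (q t)" using qF[OF t] by simp
      have Fle: "F t (q t) \<le> U"
        unfolding F_def
      proof (rule cdf_noatom[OF P g_meas[OF t]])
        fix u assume "u < q t"
        then have "\<not> U \<le> F t u" using qF[OF t] by simp
        then show "measure M {\<omega>' \<in> space M. s t (Xs \<omega>', Ys \<omega>') \<le> u} \<le> U" by (simp add: F_def)
      next
        show "measure M {\<omega>' \<in> space M. s t (Xs \<omega>', Ys \<omega>') = q t} = 0" using na by (simp add: t_def)
      qed
      have "\<bar>Fc \<omega> (q t) - F t (q t)\<bar> \<le> \<epsilon>cal" using w by (simp add: Ec_def t_def)
      then have "1 - \<alpha> \<le> Fc \<omega> (q t)" using Fge unfolding U_def by (simp add: abs_le_iff)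
      then have "qh \<omega> \<le> q t" using key by blast
      then have "Ft \<omega> (qh \<omega>) \<le> Ft \<omega> (q t)" by (rule Ft_mono)
      moreover have "\<bar>F t (q t) - Ft \<omega> (q t)\<bar> \<le> \<epsilon>test" using w by (simp add: Et_def t_def)
      ultimately have "cov \<omega> \<le> 1 - \<alpha> + (\<epsilon>cal + \<epsilon>test)" using cov_eq[of \<omega>] Fle unfolding U_def by (simp add: abs_le_iff)
      then show "\<omega> \<in> {\<omega>\<in>space M. cov \<omega> \<le> 1 - \<alpha> + (\<epsilon>cal + \<epsilon>test)}" using sp by simp
    qed
    have "measure M Ec + measure M Et - 1 \<le> measure M (Ec \<inter> Et)"
      by (rule prob_inter_ge[OF P Ecm Etm])
    moreover have "measure M (Ec \<inter> Et) + measure M G - 1 \<le> measure M ((Ec \<inter> Et) \<inter> G)"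
      by (rule prob_inter_ge[OF P]) (use Ecm Etm Gm in auto)
    moreover have "measure M ((Ec \<inter> Et) \<inter> G) \<le> measure M {\<omega>\<in>space M. cov \<omega> \<le> 1 - \<alpha> + (\<epsilon>cal + \<epsilon>test)}"
      by (rule finite_measure_mono[OF sub G2m])
    ultimately show ?thesis using Ec Et G1 by linarith
  qed
  have both: "1 - 2 * \<delta>cal - 2 * \<delta>test \<le> measure M {\<omega>\<in>space M. \<bar>cov \<omega> - (1 - \<alpha>)\<bar> \<le> \<epsilon>cal + \<epsilon>test}"
    if AEc: "AE \<omega> in M. \<forall>r::real.
            measure M {\<omega>' \<in> space M. s (train_data X Y ntr \<omega>) (Xs \<omega>', Ys \<omega>') = r} = 0"
  proof -
    have eq: "{\<omega>\<in>space M. 1 - \<alpha> - (\<epsilon>cal + \<epsilon>test) \<le> cov \<omega>} \<inter> {\<omega>\<in>space M. cov \<omega> \<le> 1 - \<alpha> + (\<epsilon>cal + \<epsilon>test)}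
       = {\<omega>\<in>space M. \<bar>cov \<omega> - (1 - \<alpha>)\<bar> \<le> \<epsilon>cal + \<epsilon>test}" by (auto simp: abs_le_iff)
    have "measure M {\<omega>\<in>space M. 1 - \<alpha> - (\<epsilon>cal + \<epsilon>test) \<le> cov \<omega>} + measure M {\<omega>\<in>space M. cov \<omega> \<le> 1 - \<alpha> + (\<epsilon>cal + \<epsilon>test)} - 1
      \<le> measure M {\<omega>\<in>space M. \<bar>cov \<omega> - (1 - \<alpha>)\<bar> \<le> \<epsilon>cal + \<epsilon>test}"
      using prob_inter_ge[OF P G1m G2m] unfolding eq .
    then show ?thesis using lower upper[OF AEc] by linarith
  qed
  show ?thesis
    using lower both unfolding cov_def by simp
qed
end
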